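(* Let $X$ be a real Hilbert space and let $\eta,\eta'\in(0,1)$ with $\eta<\eta'$. If $\delta\in(0,1)$ satisfies $\frac{\delta+\eta}{1-\delta}\le\eta'$ and $x,y\in X$ are linearly independent vectors such that $\cos(x,y)\le\eta$ and $\cos(y-x,-x)\le\delta$, then $\|x\|\le\eta'\|y\|$.
   Context: For nonzero $u,w\in X$, $\cos(u,w)=\frac{\langle u,w\rangle}{\|u\|\|w\|}$. *)

theory Defs
  imports "HOL-Analysis.Analysis"
begin

definition vcos :: "'a::real_inner \<Rightarrow> 'a \<Rightarrow> real" where
  "vcos u w = inner u w / (norm u * norm w)"

end

theory Submission
  imports Defs
begin

theorem fact4p7:
  fixes x y :: "'a::{real_inner, complete_space}"
    and \<eta> \<eta>' \<delta> :: real
  assumes "0 < \<eta>" "\<eta> < 1" "0 < \<eta>'" "\<eta>' < 1" "\<eta> < \<eta>'"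
    and "0 < \<delta>" "\<delta> < 1"
    and "(\<delta> + \<eta>) / (1 - \<delta>) \<le> \<eta>'"
    and "x \<noteq> y" "independent {x, y}"
    and "vcos x y \<le> \<eta>"
    and "vcos (y - x) (- x) \<le> \<delta>"
  shows "norm x \<le> \<eta>' * norm y"
proof -
  have x0: "x \<noteq> 0" using assms(10) dependent_zero by blast
  have y0: "y \<noteq> 0" using assms(10) dependent_zero by blast
  have d0: "y - x \<noteq> 0" using assms(9) by simp
  define a where "a = norm x"
  define b where "b = norm y"
  define e where "e = norm (y - x)"
  have a: "a > 0" using x0 a_def by simp
  have b: "b > 0" using y0 b_def by simp
  have e: "e > 0" using d0 e_def by simp
  have eab: "e \<le> a + b" unfolding e_def a_def b_def
    by (metis add.commute norm_triangle_ineq4)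
  have c1: "inner x y \<le> \<eta> * a * b"
    using assms(11) a b unfolding vcos_def a_def b_def
    by (simp add: divide_le_eq mult.assoc)
  have ip: "inner (y - x) (- x) = a * a - inner x y"
    unfolding a_def by (simp add: inner_diff_left inner_diff_right inner_commute power2_norm_eq_inner power2_eq_square[symmetric])
  have v: "inner (y - x) (- x) / (e * a) \<le> \<delta>"
    using assms(12) unfolding vcos_def e_def a_def by simp
  have c2: "a * a - inner x y \<le> \<delta> * (e * a)"
    using v a e unfolding ip by (simp add: divide_le_eq)
  have "\<delta> * (e * a) \<le> \<delta> * ((a + b) * a)"
    using eab a assms(6) by (intro mult_left_mono mult_right_mono) auto
  hence "a * a \<le> \<eta> * a * b + \<delta> * ((a + b) * a)" using c1 c2 by linarith
  hence "a * (a * (1 - \<delta>)) \<le> a * ((\<eta> + \<delta>) * b)" by (simp add: algebra_simps)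
  hence h: "a * (1 - \<delta>) \<le> (\<eta> + \<delta>) * b" using a by simp
  have "a \<le> (\<delta> + \<eta>) / (1 - \<delta>) * b"
    using h assms(7) by (simp add: field_simps)
  also have "\<dots> \<le> \<eta>' * b" using assms(8) b by (intro mult_right_mono) auto
  finally show ?thesis unfolding a_def b_def .
qed

end
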